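(* For all integers $q,k\ge2$ and every $\alpha\in(0,1/k)$ there exists a constant $C>0$ such that the following holds for all sufficiently large $n$. Let $M$ be any $k$-hypermatching on $[n]$ of size $m\le\alpha n$, let $0<b\le s\le n/32$ be integers, and let $B\subseteq\mathbb{Z}_q^n$. If (i) there exists a sequence of centers $\mathbf{c}$ for $M$ such that $B$ is $(M,\mathbf{c})$-restricted, and (ii) $|B|\ge q^{n-b}$, then $B$ is $(M,C,s)$-reduced.
   Context: Fourier coefficients: for $f:\mathbb{Z}_q^n\to\mathbb{C}$, $\widehat f(\mathbf{u})=q^{-n}\sum_{\mathbf{a}}f(\mathbf{a})\omega^{-\mathbf{u}^\top\mathbf{a}}$, $\omega=e^{2\pi i/q}$; $\|\mathbf{u}\|_0$ is the number of nonzero coordinates; $\mathbf{1}_B$ is the indicator of $B$. A $k$-hypermatching $M$ of size $m$ on $[n]$ is a list of pairwise disjoint ordered $k$-tuples $e_i$ of distinct elements of $[n]$, with indicator vectors $\mathbf{e}_i\in\mathbb{Z}_q^n$. Centers $\mathbf{c}=(c_1,\dots,c_m)$ with $c_i\in e_i$; listing $e_i$ as $((e_i)_1,\dots,(e_i)_{k-1},c_i)$, the folded encoding $A_{\mathbf{c}}\in\mathbb{Z}_q^{(k-1)m\times n}$ has row $(k-1)(i-1)+\ell$ ($\ell\in[k-1]$) with $1$ in column $(e_i)_\ell$, $-1$ in column $c_i$, $0$ elsewhere. $B$ is $(M,\mathbf{c})$-restricted if $B=\{\mathbf{x}:A_{\mathbf{c}}\mathbf{x}\in B_r\}$ for some $B_r\subseteq\mathbb{Z}_q^{(k-1)m}$.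 For $C>0$, $0\le s\le n$: $U_{C,s}(0)=1$, $U_{C,s}(h)=(C\sqrt{sn}/h)^{h/2}$ for $1\le h\le s$, $U_{C,s}(h)=(2q^2e^2n/h)^{h/2}$ for $h>s$. $B$ is $(M,C,s)$-reduced if: (1) $\widehat{\mathbf{1}_B}(\mathbf{u})=0$ whenever some $j$ with $u_j\neq0$ is not covered by $M$; (2) $\widehat{\mathbf{1}_B}(\mathbf{u})=0$ whenever $\langle\mathbf{u},\mathbf{e}_i\rangle\not\equiv0\pmod q$ for some edge $e_i$; (3) for every $h\in\{1,\dots,s\}$ and every $\mathbf{v}\in\mathbb{Z}_q^n$, $\sum_{\mathbf{u}:\|\mathbf{u}+\mathbf{v}\|_0=h}\frac{q^n}{|B|}|\widehat{\mathbf{1}_B}(\mathbf{u})|\le U_{C,s}(h)$. *)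

theory Defs
  imports "HOL-Analysis.Analysis"
begin

text \<open>Elements of Z_q^n are functions nat => nat with values in {0..<q} on
  the index set {0..<n} (0-based version of [n]) and value 0 outside.\<close>
definition vecs :: "nat \<Rightarrow> nat \<Rightarrow> (nat \<Rightarrow> nat) set" where
  "vecs q n = {x. (\<forall>i<n. x i < q) \<and> (\<forall>i. n \<le> i \<longrightarrow> x i = 0)}"

definition vadd :: "nat \<Rightarrow> (nat \<Rightarrow> nat) \<Rightarrow> (nat \<Rightarrow> nat) \<Rightarrow> (nat \<Rightarrow> nat)" where
  "vadd q u v = (\<lambda>i. (u i + v i) mod q)"

definition hweight :: "nat \<Rightarrow> (nat \<Rightarrow> nat) \<Rightarrow> nat" where
  "hweight n u = card {i. i < n \<and> u i \<noteq> 0}"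

definition fourier :: "nat \<Rightarrow> nat \<Rightarrow> ((nat \<Rightarrow> nat) \<Rightarrow> complex) \<Rightarrow> (nat \<Rightarrow> nat) \<Rightarrow> complex" where
  "fourier q n f u = (1 / of_nat (q ^ n)) *
     (\<Sum>a\<in>vecs q n. f a * cis (- 2 * pi * real (\<Sum>j<n. u j * a j) / real q))"

definition indic_set :: "(nat \<Rightarrow> nat) set \<Rightarrow> (nat \<Rightarrow> nat) \<Rightarrow> complex" where
  "indic_set B a = (if a \<in> B then 1 else 0)"

definition hypermatching :: "nat \<Rightarrow> nat \<Rightarrow> nat list list \<Rightarrow> bool" where
  "hypermatching k n M \<longleftrightarrow>
     (\<forall>e\<in>set M. length e = k \<and> distinct e \<and> set e \<subseteq> {..<n}) \<and>
     (\<forall>i<length M. \<forall>i'<length M. i \<noteq> i' \<longrightarrow> set (M ! i) \<inter> set (M ! i') = {})"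

definition centers :: "nat list list \<Rightarrow> nat list \<Rightarrow> bool" where
  "centers M c \<longleftrightarrow> length c = length M \<and> (\<forall>i<length M. c ! i \<in> set (M ! i))"

text \<open>Folded encoding A_c, a (k-1)m x n integer matrix (0-based rows and columns).
  Row (k-1)i + l has 1 in column (e_i)_l (the l-th non-center element of e_i,
  in the order of e_i) and -1 in column c_i.\<close>
definition fold_mat :: "nat \<Rightarrow> nat list list \<Rightarrow> nat list \<Rightarrow> nat \<Rightarrow> nat \<Rightarrow> int" where
  "fold_mat k M c r j =
     (if r < (k - 1) * length M then
        (let i = r div (k - 1); l = r mod (k - 1);
             others = filter (\<lambda>x. x \<noteq> c ! i) (M ! i)
         in (if j = others ! l then 1 else 0) - (if j = c ! i then 1 else 0))
      else 0)"

definition matvec :: "nat \<Rightarrow> nat \<Rightarrow> nat \<Rightarrow> (nat \<Rightarrow> nat \<Rightarrow> int) \<Rightarrow> (nat \<Rightarrow> nat) \<Rightarrow> (nat \<Rightarrow> nat)" where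
  "matvec q R n A x = (\<lambda>r. if r < R then nat ((\<Sum>j<n. A r j * int (x j)) mod int q) else 0)"

definition restricted :: "nat \<Rightarrow> nat \<Rightarrow> nat \<Rightarrow> nat list list \<Rightarrow> nat list \<Rightarrow> (nat \<Rightarrow> nat) set \<Rightarrow> bool" where
  "restricted q k n M c B \<longleftrightarrow>
     (\<exists>Br \<subseteq> vecs q ((k - 1) * length M).
        B = {x \<in> vecs q n. matvec q ((k - 1) * length M) n (fold_mat k M c) x \<in> Br})"

definition Ubound :: "nat \<Rightarrow> real \<Rightarrow> nat \<Rightarrow> nat \<Rightarrow> nat \<Rightarrow> real" where
  "Ubound q C s n h =
     (if h = 0 then 1
      else if h \<le> s then (C * sqrt (real s * real n) / real h) powr (real h / 2)
      else (2 * real q ^ 2 * exp 1 ^ 2 * real n / real h) powr (real h / 2))"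

definition covered :: "nat list list \<Rightarrow> nat \<Rightarrow> bool" where
  "covered M j \<longleftrightarrow> (\<exists>i<length M. j \<in> set (M ! i))"

definition reduced :: "nat \<Rightarrow> nat \<Rightarrow> nat list list \<Rightarrow> real \<Rightarrow> nat \<Rightarrow> (nat \<Rightarrow> nat) set \<Rightarrow> bool" where
  "reduced q n M C s B \<longleftrightarrow>
     (\<forall>u\<in>vecs q n. (\<exists>j<n. u j \<noteq> 0 \<and> \<not> covered M j) \<longrightarrow> fourier q n (indic_set B) u = 0) \<and>
     (\<forall>u\<in>vecs q n. (\<exists>i<length M. (\<Sum>j\<in>set (M ! i). u j) mod q \<noteq> 0)
                     \<longrightarrow> fourier q n (indic_set B) u = 0) \<and>
     (\<forall>h\<in>{1..s}. \<forall>v\<in>vecs q n.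
        (\<Sum>u\<in>{u\<in>vecs q n. hweight n (vadd q u v) = h}.
            real (q ^ n) / real (card B) * cmod (fourier q n (indic_set B) u))
        \<le> Ubound q C s n h)"

end

theory Submission
  imports Defs
begin



definition chi :: "nat \<Rightarrow> nat \<Rightarrow> (nat \<Rightarrow> int) \<Rightarrow> (nat \<Rightarrow> nat) \<Rightarrow> complex" where
  "chi q n w x = cis (2 * pi * real_of_int (\<Sum>j<n. w j * int (x j)) / real q)"

lemma vecs_bij:
  "bij_betw (\<lambda>x. restrict x {..<n}) (vecs q n) (PiE {..<n} (\<lambda>_. {..<q}))"
proof (rule bij_betw_byWitness[where f' = "\<lambda>f i. if i < n then f i else 0"])
  show "\<forall>a\<in>vecs q n. (\<lambda>i. if i < n then restrict a {..<n} i else 0) = a"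
    by (auto simp: vecs_def fun_eq_iff)
  show "\<forall>a'\<in>PiE {..<n} (\<lambda>_. {..<q}). restrict (\<lambda>i. if i < n then a' i else 0) {..<n} = a'"
    by (auto simp: PiE_def extensional_def fun_eq_iff)
  show "(\<lambda>x. restrict x {..<n}) ` vecs q n \<subseteq> PiE {..<n} (\<lambda>_. {..<q})"
    by (force simp: vecs_def PiE_iff)
  show "(\<lambda>f i. if i < n then f i else 0) ` PiE {..<n} (\<lambda>_. {..<q}) \<subseteq> vecs q n"
    by (auto simp: vecs_def PiE_def Pi_def)
qed

lemma finite_vecs: "finite (vecs q n)"
  using bij_betw_finite[OF vecs_bij] by (simp add: finite_PiE)

lemma card_vecs: "card (vecs q n) = q ^ n"
  using bij_betw_same_card[OF vecs_bij] by (simp add: card_PiE)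

lemma vadd_vecs: "q > 0 \<Longrightarrow> x \<in> vecs q n \<Longrightarrow> z \<in> vecs q n \<Longrightarrow> vadd q x z \<in> vecs q n"
  by (auto simp: vecs_def vadd_def)

lemma vadd_inj: "inj_on (\<lambda>x. vadd q x z) (vecs q n)"
proof (rule inj_onI)
  fix x y assume x: "x \<in> vecs q n" and y: "y \<in> vecs q n" and e: "vadd q x z = vadd q y z"
  show "x = y"
  proof
    fix i
    show "x i = y i"
    proof (cases "i < n")
      case True
      have "(x i + z i) mod q = (y i + z i) mod q" using e by (metis vadd_def)
      then have "x i mod q = y i mod q" using nat_mod_eq_iff by fastforce
      moreover have "x i < q" "y i < q" using x y True by (auto simp: vecs_def)
      ultimately show ?thesis by simp
    next
      case False
      then show ?thesis using x y by (auto simp: vecs_def)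
    qed
  qed
qed

lemma sum_shift:
  assumes "q > 0" "A \<subseteq> vecs q n" "z \<in> vecs q n" "\<And>x. x \<in> A \<Longrightarrow> vadd q x z \<in> A"
  shows "(\<Sum>x\<in>A. f (vadd q x z)) = (\<Sum>x\<in>A. f x)"
proof -
  have fin: "finite A" using assms(2) finite_vecs finite_subset by blast
  have inj: "inj_on (\<lambda>x. vadd q x z) A" using vadd_inj inj_on_subset assms(2) by blast
  have "(\<lambda>x. vadd q x z) ` A = A"
    using endo_inj_surj[OF fin _ inj] assms(4) by blast
  then show ?thesis using sum.reindex[OF inj, of f] by simp
qed

lemma chi_shift:
  assumes "q > 0"
  shows "chi q n w (vadd q x z) = chi q n w x * chi q n w z"
proof -
  define K where "K = (\<Sum>j<n. w j * ((int (x j) + int (z j)) div int q))"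
  have "(\<Sum>j<n. w j * int (vadd q x z j)) =
        (\<Sum>j<n. w j * int (x j) + w j * int (z j) - int q * (w j * ((int (x j) + int (z j)) div int q)))"
  proof (rule sum.cong[OF refl])
    fix j
    have h: "int ((x j + z j) mod q) = (int (x j) + int (z j)) - int q * ((int (x j) + int (z j)) div int q)"
      by (metis of_nat_add of_nat_mod minus_div_mult_eq_mod mult.commute)
    show "w j * int (vadd q x z j) = w j * int (x j) + w j * int (z j) - int q * (w j * ((int (x j) + int (z j)) div int q))"
      unfolding vadd_def h by (simp add: algebra_simps)
  qed
  also have "\<dots> = (\<Sum>j<n. w j * int (x j)) + (\<Sum>j<n. w j * int (z j)) - int q * K"
    by (simp add: K_def sum.distrib sum_subtractf sum_distrib_left)
  finally have eq: "(\<Sum>j<n. w j * int (vadd q x z j)) = (\<Sum>j<n. w j * int (x j)) + (\<Sum>j<n. w j * int (z j)) - int q * K" .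
  define a where "a = 2 * pi * real_of_int (\<Sum>j<n. w j * int (x j)) / real q"
  define bb where "bb = 2 * pi * real_of_int (\<Sum>j<n. w j * int (z j)) / real q"
  have E: "2 * pi * real_of_int ((\<Sum>j<n. w j * int (x j)) + (\<Sum>j<n. w j * int (z j)) - int q * K) / real q
       = a + bb + 2 * pi * real_of_int (- K)"
    using assms unfolding a_def bb_def by (simp add: field_simps)
  have c1: "cis (2 * pi * real_of_int (- K)) = 1"
    by (rule cis_multiple_2pi) simp
  have "chi q n w (vadd q x z) = cis (a + bb + 2 * pi * real_of_int (- K))"
    unfolding chi_def eq E by simp
  also have "\<dots> = cis a * cis bb * cis (2 * pi * real_of_int (- K))"
    by (simp only: cis_mult)
  also have "\<dots> = chi q n w x * chi q n w z"
    unfolding c1 a_def bb_def chi_def by simp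
  finally show ?thesis .
qed

lemma sum_chi_zero:
  assumes "q > 0" "A \<subseteq> vecs q n" "z \<in> vecs q n" "\<And>x. x \<in> A \<Longrightarrow> vadd q x z \<in> A"
    and "chi q n w z \<noteq> 1"
  shows "(\<Sum>x\<in>A. chi q n w x) = 0"
proof -
  have "(\<Sum>x\<in>A. chi q n w x) = (\<Sum>x\<in>A. chi q n w (vadd q x z))"
    using sum_shift[OF assms(1-4), of "chi q n w"] by simp
  also have "\<dots> = chi q n w z * (\<Sum>x\<in>A. chi q n w x)"
    by (simp add: chi_shift[OF assms(1)] sum_distrib_left mult.commute)
  finally show ?thesis using assms(5)
    by (metis mult_cancel_right1)
qed

lemma cis_ne_1:
  assumes "q > 0" "\<not> int q dvd t"
  shows "cis (2 * pi * real_of_int t / real q) \<noteq> 1"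
proof
  assume "cis (2 * pi * real_of_int t / real q) = 1"
  then have "cos (2 * pi * real_of_int t / real q) = 1" by (metis cis.simps(1) one_complex.simps(1))
  then obtain m :: int where "2 * pi * real_of_int t / real q = 2 * pi * real_of_int m"
    using cos_one_2pi_int by auto
  then have "real_of_int t = real q * real_of_int m" using assms(1) by (simp add: field_simps)
  then have "t = int q * m" by (metis of_int_eq_iff of_int_mult of_int_of_nat_eq)
  then show False using assms(2) by simp
qed




lemma hm_edge: "hypermatching k n M \<Longrightarrow> i < length M \<Longrightarrow> length (M ! i) = k \<and> distinct (M ! i) \<and> set (M ! i) \<subseteq> {..<n}"
  unfolding hypermatching_def by auto

lemma hm_disj: "hypermatching k n M \<Longrightarrow> i < length M \<Longrightarrow> i' < length M \<Longrightarrow> i \<noteq> i' \<Longrightarrow> set (M ! i) \<inter> set (M ! i') = {}"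
  unfolding hypermatching_def by auto

lemma fold_mat_row:
  assumes hm: "hypermatching k n M" and ce: "centers M c" and k: "k \<ge> 2"
    and r: "r < (k - 1) * length M"
  obtains i a cc where "i < length M" "a \<in> set (M ! i)" "cc \<in> set (M ! i)"
    "\<And>j. fold_mat k M c r j = (if j = a then 1 else 0) - (if j = cc then 1 else 0)"
proof -
  define i where "i = r div (k - 1)"
  define l where "l = r mod (k - 1)"
  define others where "others = filter (\<lambda>x. x \<noteq> c ! i) (M ! i)"
  have k1: "k - 1 > 0" using k by simp
  have i: "i < length M" unfolding i_def using r k1
    by (simp add: div_less_iff_less_mult mult.commute)
  have l: "l < k - 1" unfolding l_def using k1 by simp
  have e: "length (M ! i) = k" "distinct (M ! i)" using hm_edge[OF hm i] by auto
  have cin: "c ! i \<in> set (M ! i)" using ce i unfolding centers_def by auto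
  have "length others = card ({x. x \<noteq> c ! i} \<inter> set (M ! i))"
    unfolding others_def using e(2) by (simp add: distinct_length_filter)
  also have "{x. x \<noteq> c ! i} \<inter> set (M ! i) = set (M ! i) - {c ! i}" by blast
  also have "card \<dots> = k - 1" using cin e by (simp add: distinct_card)
  finally have lo: "length others = k - 1" .
  have ain: "others ! l \<in> set (M ! i)"
    using nth_mem[of l others] lo l unfolding others_def by auto
  show ?thesis
  proof (rule that[OF i ain cin])
    fix j show "fold_mat k M c r j = (if j = others ! l then 1 else 0) - (if j = c ! i then 1 else 0)"
      unfolding fold_mat_def using r by (simp add: Let_def i_def l_def others_def)
  qed
qed

lemma fold_mat_rowsum:
  assumes hm: "hypermatching k n M" and ce: "centers M c" and k: "k \<ge> 2"
    and zc: "\<And>i a b. i < length M \<Longrightarrow> a \<in> set (M ! i) \<Longrightarrow> b \<in> set (M ! i) \<Longrightarrow> z a = z b"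
  shows "(\<Sum>j<n. fold_mat k M c r j * int (z j)) = 0"
proof (cases "r < (k - 1) * length M")
  case True
  obtain i a cc where i: "i < length M" and a: "a \<in> set (M ! i)" and cc: "cc \<in> set (M ! i)"
    and f: "\<And>j. fold_mat k M c r j = (if j = a then 1 else 0) - (if j = cc then 1 else 0)"
    using fold_mat_row[OF hm ce k True] by blast
  have an: "a < n" "cc < n" using hm_edge[OF hm i] a cc by auto
  have "(\<Sum>j<n. fold_mat k M c r j * int (z j)) =
        (\<Sum>j<n. (if j = a then int (z j) else 0)) - (\<Sum>j<n. (if j = cc then int (z j) else 0))"
    unfolding f sum_subtractf[symmetric] by (rule sum.cong) auto
  also have "\<dots> = int (z a) - int (z cc)" using an by simp
  also have "\<dots> = 0" using zc[OF i a cc] by simp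
  finally show ?thesis .
next
  case False
  then show ?thesis unfolding fold_mat_def by simp
qed

lemma matvec_shift:
  assumes q: "q > 0" and z0: "\<And>r. r < R \<Longrightarrow> (\<Sum>j<n. A r j * int (z j)) = 0"
  shows "matvec q R n A (vadd q x z) = matvec q R n A x"
proof
  fix r
  show "matvec q R n A (vadd q x z) r = matvec q R n A x r"
  proof (cases "r < R")
    case True
    have "(\<Sum>j<n. A r j * int (vadd q x z j)) mod int q = (\<Sum>j<n. (A r j * int (vadd q x z j)) mod int q) mod int q"
      by (simp add: mod_sum_eq)
    also have "(\<lambda>j. (A r j * int (vadd q x z j)) mod int q) = (\<lambda>j. (A r j * int (x j) + A r j * int (z j)) mod int q)"
    proof
      fix j
      have "(A r j * int ((x j + z j) mod q)) mod int q = (A r j * (int (x j) + int (z j))) mod int q"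
        by (simp add: of_nat_mod mod_mult_right_eq)
      then show "(A r j * int (vadd q x z j)) mod int q = (A r j * int (x j) + A r j * int (z j)) mod int q"
        unfolding vadd_def by (simp add: distrib_left)
    qed
    also have "(\<Sum>j<n. (A r j * int (x j) + A r j * int (z j)) mod int q) mod int q
       = (\<Sum>j<n. A r j * int (x j) + A r j * int (z j)) mod int q"
      by (simp add: mod_sum_eq)
    also have "(\<Sum>j<n. A r j * int (x j) + A r j * int (z j)) = (\<Sum>j<n. A r j * int (x j))"
      using z0[OF True] by (simp add: sum.distrib)
    finally show ?thesis unfolding matvec_def using True by simp
  next
    case False
    then show ?thesis unfolding matvec_def by simp
  qed
qed

lemma restricted_shift:
  assumes q: "q > 0" and hm: "hypermatching k n M" and ce: "centers M c" and k: "k \<ge> 2"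
    and res: "restricted q k n M c B"
    and zc: "\<And>i a b. i < length M \<Longrightarrow> a \<in> set (M ! i) \<Longrightarrow> b \<in> set (M ! i) \<Longrightarrow> z a = z b"
    and z: "z \<in> vecs q n" and x: "x \<in> B"
  shows "vadd q x z \<in> B"
proof -
  obtain Br where B: "B = {x \<in> vecs q n. matvec q ((k - 1) * length M) n (fold_mat k M c) x \<in> Br}"
    using res unfolding restricted_def by blast
  have "matvec q ((k - 1) * length M) n (fold_mat k M c) (vadd q x z) = matvec q ((k - 1) * length M) n (fold_mat k M c) x"
    by (rule matvec_shift[OF q]) (rule fold_mat_rowsum[OF hm ce k zc])
  then show ?thesis using x B vadd_vecs[OF q _ z] by auto
qed

lemma fourier_eq:
  assumes "B \<subseteq> vecs q n"
  shows "fourier q n (indic_set B) u = (1 / of_nat (q ^ n)) * (\<Sum>x\<in>B. chi q n (\<lambda>j. - int (u j)) x)"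
proof -
  have "(\<Sum>a\<in>vecs q n. indic_set B a * cis (- 2 * pi * real (\<Sum>j<n. u j * a j) / real q))
      = (\<Sum>a\<in>B. cis (- 2 * pi * real (\<Sum>j<n. u j * a j) / real q))"
  proof -
    have "(\<Sum>a\<in>vecs q n. indic_set B a * cis (- 2 * pi * real (\<Sum>j<n. u j * a j) / real q))
      = (\<Sum>a\<in>vecs q n. if a \<in> B then cis (- 2 * pi * real (\<Sum>j<n. u j * a j) / real q) else 0)"
      unfolding indic_set_def by (rule sum.cong) auto
    also have "\<dots> = (\<Sum>a\<in>vecs q n \<inter> B. cis (- 2 * pi * real (\<Sum>j<n. u j * a j) / real q))"
      by (rule sum.inter_restrict[OF finite_vecs, symmetric])
    also have "vecs q n \<inter> B = B" using assms by blast
    finally show ?thesis .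
  qed
  also have "\<dots> = (\<Sum>x\<in>B. chi q n (\<lambda>j. - int (u j)) x)"
    unfolding chi_def by (simp add: sum_negf)
  finally show ?thesis unfolding fourier_def by simp
qed

lemma unit_vec: "q \<ge> 2 \<Longrightarrow> j < n \<Longrightarrow> (\<lambda>i. if i = j then 1 else 0) \<in> vecs q n"
  unfolding vecs_def by auto

lemma ind_vec: "q \<ge> 2 \<Longrightarrow> E \<subseteq> {..<n} \<Longrightarrow> (\<lambda>i. if i \<in> E then 1 else 0) \<in> vecs q n"
  unfolding vecs_def by auto

lemma fourier_supp1:
  assumes q: "q \<ge> 2" and hm: "hypermatching k n M" and ce: "centers M c" and k: "k \<ge> 2"
    and res: "restricted q k n M c B" and Bv: "B \<subseteq> vecs q n"
    and u: "u \<in> vecs q n" and j: "j < n" "u j \<noteq> 0" "\<not> covered M j"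
  shows "fourier q n (indic_set B) u = 0"
proof -
  define z where "z = (\<lambda>i::nat. if i = j then 1 else 0::nat)"
  have z: "z \<in> vecs q n" unfolding z_def using unit_vec[OF q j(1)] .
  have q0: "q > 0" using q by simp
  have zc: "z a = z b" if "i < length M" "a \<in> set (M ! i)" "b \<in> set (M ! i)" for i a b
    using j(3) that unfolding z_def covered_def by auto
  have "(\<Sum>l<n. - int (u l) * int (z l)) = - int (u j)"
    unfolding z_def using j(1) by (simp add: if_distrib cong: if_cong)
  then have cz: "chi q n (\<lambda>l. - int (u l)) z = cis (2 * pi * real_of_int (- int (u j)) / real q)"
    unfolding chi_def by simp
  have "u j < q" using u j unfolding vecs_def by auto
  then have nd: "\<not> int q dvd - int (u j)" using j(2)
    by (metis dvd_minus_iff of_nat_dvd_iff nat_dvd_not_less neq0_conv)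
  have "(\<Sum>x\<in>B. chi q n (\<lambda>l. - int (u l)) x) = 0"
    by (rule sum_chi_zero[OF q0 Bv z restricted_shift[OF q0 hm ce k res zc z]])
       (use cz cis_ne_1[OF q0 nd] in auto)
  then show ?thesis using fourier_eq[OF Bv] by simp
qed

lemma fourier_supp2:
  assumes q: "q \<ge> 2" and hm: "hypermatching k n M" and ce: "centers M c" and k: "k \<ge> 2"
    and res: "restricted q k n M c B" and Bv: "B \<subseteq> vecs q n"
    and u: "u \<in> vecs q n" and i: "i < length M" "(\<Sum>j\<in>set (M ! i). u j) mod q \<noteq> 0"
  shows "fourier q n (indic_set B) u = 0"
proof -
  define E where "E = set (M ! i)"
  have En: "E \<subseteq> {..<n}" using hm_edge[OF hm i(1)] unfolding E_def by auto
  define z where "z = (\<lambda>l::nat. if l \<in> E then 1 else 0::nat)"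
  have z: "z \<in> vecs q n" unfolding z_def using ind_vec[OF q En] .
  have q0: "q > 0" using q by simp
  have zc: "z a = z b" if "i' < length M" "a \<in> set (M ! i')" "b \<in> set (M ! i')" for i' a b
  proof (cases "i' = i")
    case True then show ?thesis using that unfolding z_def E_def by auto
  next
    case False then show ?thesis using that hm_disj[OF hm that(1) i(1) False] unfolding z_def E_def by auto
  qed
  have "(\<Sum>l<n. - int (u l) * int (z l)) = (\<Sum>l\<in>{..<n} \<inter> E. - int (u l))"
    unfolding z_def by (simp add: if_distrib sum.If_cases cong: if_cong)
  also have "{..<n} \<inter> E = E" using En by blast
  finally have "(\<Sum>l<n. - int (u l) * int (z l)) = - int (\<Sum>l\<in>E. u l)" by (simp add: sum_negf)
  then have cz: "chi q n (\<lambda>l. - int (u l)) z = cis (2 * pi * real_of_int (- int (\<Sum>l\<in>E. u l)) / real q)"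
    unfolding chi_def by simp
  have "\<not> q dvd (\<Sum>l\<in>E. u l)" using i(2) by (simp add: E_def dvd_eq_mod_eq_0)
  then have nd: "\<not> int q dvd - int (\<Sum>l\<in>E. u l)"
  proof (rule contrapos_nn)
    assume "int q dvd - int (\<Sum>l\<in>E. u l)"
    then have "int q dvd int (\<Sum>l\<in>E. u l)" by (simp only: dvd_minus_iff)
    then show "q dvd (\<Sum>l\<in>E. u l)" by (simp only: of_nat_dvd_iff)
  qed
  have "(\<Sum>x\<in>B. chi q n (\<lambda>l. - int (u l)) x) = 0"
    by (rule sum_chi_zero[OF q0 Bv z restricted_shift[OF q0 hm ce k res zc z]])
       (use cz cis_ne_1[OF q0 nd] in auto)
  then show ?thesis using fourier_eq[OF Bv] by simp
qed




lemma double_count: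
  assumes fI: "finite I" and fA: "\<And>i. i \<in> I \<Longrightarrow> finite (A i)"
    and two: "\<And>x. x \<in> (\<Union>i\<in>I. A i) \<Longrightarrow> \<exists>i1\<in>I. \<exists>i2\<in>I. i1 \<noteq> i2 \<and> x \<in> A i1 \<and> x \<in> A i2"
  shows "2 * card (\<Union>i\<in>I. A i) \<le> (\<Sum>i\<in>I. card (A i))"
proof -
  let ?U = "\<Union>i\<in>I. A i"
  have fU: "finite ?U" using fI fA by blast
  have "(\<Sum>i\<in>I. card (A i)) = (\<Sum>i\<in>I. \<Sum>x\<in>?U. if x \<in> A i then 1 else 0)"
  proof (rule sum.cong[OF refl])
    fix i assume i: "i \<in> I"
    have sub: "A i \<subseteq> ?U" using i by blast
    have "(\<Sum>x\<in>?U. if x \<in> A i then 1 else (0::nat)) = (\<Sum>x\<in>?U \<inter> A i. 1)"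
      using sum.inter_restrict[OF fU, of "\<lambda>_. 1::nat" "A i"] by simp
    also have "?U \<inter> A i = A i" using sub by blast
    finally show "card (A i) = (\<Sum>x\<in>?U. if x \<in> A i then 1 else 0)" by simp
  qed
  also have "\<dots> = (\<Sum>x\<in>?U. \<Sum>i\<in>I. if x \<in> A i then 1 else 0)"
    by (rule sum.swap)
  also have "\<dots> = (\<Sum>x\<in>?U. card {i\<in>I. x \<in> A i})"
  proof (rule sum.cong[OF refl])
    fix x
    have "(\<Sum>i\<in>I. if x \<in> A i then 1 else (0::nat)) = (\<Sum>i\<in>I \<inter> {i. x \<in> A i}. 1)"
      using sum.inter_restrict[OF fI, of "\<lambda>_. 1::nat" "{i. x \<in> A i}"] by simp
    also have "I \<inter> {i. x \<in> A i} = {i\<in>I. x \<in> A i}" by blast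
    finally show "(\<Sum>i\<in>I. if x \<in> A i then 1 else 0) = card {i\<in>I. x \<in> A i}" by simp
  qed
  also have "\<dots> \<ge> (\<Sum>x\<in>?U. 2)"
  proof (rule sum_mono)
    fix x assume x: "x \<in> ?U"
    obtain i1 i2 where "i1 \<in> I" "i2 \<in> I" "i1 \<noteq> i2" "x \<in> A i1" "x \<in> A i2" using two[OF x] by blast
    then have "{i1, i2} \<subseteq> {i\<in>I. x \<in> A i}" by blast
    moreover have "finite {i\<in>I. x \<in> A i}" using fI by simp
    ultimately have "card {i1, i2} \<le> card {i\<in>I. x \<in> A i}" by (rule card_mono[rotated])
    then show "2 \<le> card {i\<in>I. x \<in> A i}" using \<open>i1 \<noteq> i2\<close> by simp
  qed
  finally show ?thesis by (simp add: mult.commute)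
qed

lemma card_small_subsets:
  assumes "finite S"
  shows "card {D. D \<subseteq> S \<and> card D \<le> d} \<le> (card S + d) choose d"
proof -
  have "{D. D \<subseteq> S \<and> card D \<le> d} = (\<Union>j\<in>{..d}. {D. D \<subseteq> S \<and> card D = j})" by auto
  then have "card {D. D \<subseteq> S \<and> card D \<le> d} \<le> (\<Sum>j\<le>d. card {D. D \<subseteq> S \<and> card D = j})"
    using card_UN_le[of "{..d}" "\<lambda>j. {D. D \<subseteq> S \<and> card D = j}"] by simp
  also have "\<dots> = (\<Sum>j\<le>d. card S choose j)" using n_subsets[OF assms] by simp
  also have "\<dots> \<le> (\<Sum>j\<le>d. (card S choose j) * (d choose (d - j)))"
  proof (rule sum_mono)
    fix j assume "j \<in> {..d}"
    then have "0 < d choose (d - j)" by (simp add: zero_less_binomial_iff)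
    then have "1 \<le> d choose (d - j)" by linarith
    then show "card S choose j \<le> (card S choose j) * (d choose (d - j))"
      using mult_le_mono2[of 1 "d choose (d - j)" "card S choose j"] by simp
  qed
  also have "\<dots> = (card S + d) choose d" by (rule vandermonde)
  finally show ?thesis .
qed

lemma fact_lower: "(real j / exp 1) ^ j \<le> fact j"
proof -
  have "real j ^ j / fact j \<le> exp (real j)"
  proof -
    have s: "summable (\<lambda>i. real j ^ i / fact i)"
      using exp_converges[of "real j"] by (simp add: sums_iff divide_inverse mult.commute)
    have "(\<Sum>i\<in>{j}. real j ^ i / fact i) \<le> (\<Sum>i. real j ^ i / fact i)"
      by (rule sum_le_suminf[OF s]) auto
    also have "(\<Sum>i. real j ^ i / fact i) = exp (real j)"
      using exp_converges[of "real j"] by (simp add: sums_iff divide_inverse mult.commute)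
    finally show ?thesis by simp
  qed
  then have "real j ^ j \<le> exp (real j) * fact j" by (simp add: divide_le_eq)
  moreover have "exp (real j) = exp 1 ^ j" by (simp add: exp_of_nat_mult[symmetric])
  ultimately show ?thesis by (simp add: power_divide divide_le_eq mult.commute)
qed




lemma mod_eq_small:
  assumes "a < q" "b < (q::nat)" "(a + c) mod q = (b + c) mod q"
  shows "a = b"
proof -
  have "a mod q = b mod q" using assms(3) nat_mod_eq_iff by fastforce
  then show ?thesis using assms(1,2) by simp
qed

locale cnt =
  fixes q n k :: nat and M :: "nat list list" and v :: "nat \<Rightarrow> nat" and h :: nat
  assumes q: "q \<ge> 2" and hm: "hypermatching k n M" and v: "v \<in> vecs q n"
begin

definition "UU = {u \<in> vecs q n. (\<forall>j<n. \<not> covered M j \<longrightarrow> u j = 0) \<and>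
   (\<forall>i<length M. (\<Sum>j\<in>set (M ! i). u j) mod q = 0)}"
definition "W1 = {u \<in> UU. hweight n (vadd q u v) = h}"
definition "nzs u i = {j \<in> set (M ! i). (u j + v j) mod q \<noteq> 0}"
definition "E1 = {i. i < length M \<and> (\<Sum>j\<in>set (M ! i). v j) mod q \<noteq> 0}"
definition "e0act u = {i. i < length M \<and> i \<notin> E1 \<and> nzs u i \<noteq> {}}"

lemma q0: "q > 0" using q by simp

lemma sum_uv_mod:
  assumes "u \<in> UU" "i < length M"
  shows "(\<Sum>j\<in>set (M ! i). (u j + v j) mod q) mod q = (\<Sum>j\<in>set (M ! i). v j) mod q"
proof -
  have "(\<Sum>j\<in>set (M ! i). (u j + v j) mod q) mod q = (\<Sum>j\<in>set (M ! i). u j + v j) mod q"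
    by (rule mod_sum_eq)
  also have "\<dots> = ((\<Sum>j\<in>set (M ! i). u j) + (\<Sum>j\<in>set (M ! i). v j)) mod q"
    by (simp add: sum.distrib)
  also have "\<dots> = ((\<Sum>j\<in>set (M ! i). u j) mod q + (\<Sum>j\<in>set (M ! i). v j)) mod q"
    by (simp add: mod_add_left_eq)
  also have "\<dots> = (\<Sum>j\<in>set (M ! i). v j) mod q" using assms unfolding UU_def by simp
  finally show ?thesis .
qed

lemma E1_act: "u \<in> UU \<Longrightarrow> i \<in> E1 \<Longrightarrow> nzs u i \<noteq> {}"
proof
  assume u: "u \<in> UU" and i: "i \<in> E1" and e: "nzs u i = {}"
  have il: "i < length M" using i unfolding E1_def by simp
  have "\<forall>j\<in>set (M ! i). (u j + v j) mod q = 0" using e unfolding nzs_def by blast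
  then have "(\<Sum>j\<in>set (M ! i). (u j + v j) mod q) = 0" by simp
  then have "(\<Sum>j\<in>set (M ! i). v j) mod q = 0" using sum_uv_mod[OF u il] by simp
  then show False using i unfolding E1_def by simp
qed

lemma E0_two:
  assumes u: "u \<in> UU" and i: "i < length M" "i \<notin> E1" and ne: "nzs u i \<noteq> {}"
  shows "2 \<le> card (nzs u i)"
proof (rule ccontr)
  assume "\<not> 2 \<le> card (nzs u i)"
  moreover have "finite (nzs u i)" unfolding nzs_def by simp
  ultimately obtain j0 where j0: "nzs u i = {j0}" using ne
    by (metis One_nat_def card_0_eq card_1_singletonE less_2_cases not_le)
  have j0e: "j0 \<in> set (M ! i)" using j0 unfolding nzs_def by blast
  have "(\<Sum>j\<in>set (M ! i). (u j + v j) mod q) = (u j0 + v j0) mod q"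
  proof -
    have "(\<Sum>j\<in>set (M ! i). (u j + v j) mod q) = (u j0 + v j0) mod q + (\<Sum>j\<in>set (M ! i) - {j0}. (u j + v j) mod q)"
      using j0e by (simp add: sum.remove)
    also have "(\<Sum>j\<in>set (M ! i) - {j0}. (u j + v j) mod q) = 0"
      using j0 unfolding nzs_def by (intro sum.neutral) blast
    finally show ?thesis by simp
  qed
  then have "(u j0 + v j0) mod q = (\<Sum>j\<in>set (M ! i). v j) mod q" using sum_uv_mod[OF u i(1)] by simp
  also have "\<dots> = 0" using i unfolding E1_def by simp
  finally have "(u j0 + v j0) mod q = 0" .
  moreover have "j0 \<in> nzs u i" using j0 by simp
  ultimately show False unfolding nzs_def by simp
qed

lemma nzs_sum_le:
  assumes u: "u \<in> vecs q n"
  shows "(\<Sum>i<length M. card (nzs u i)) \<le> hweight n (vadd q u v)"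
proof -
  have "(\<Sum>i<length M. card (nzs u i)) = card (\<Union>i<length M. nzs u i)"
  proof (rule card_UN_disjoint[symmetric])
    show "finite {..<length M}" by simp
    show "\<forall>i\<in>{..<length M}. finite (nzs u i)" unfolding nzs_def by simp
    show "\<forall>i\<in>{..<length M}. \<forall>j\<in>{..<length M}. i \<noteq> j \<longrightarrow> nzs u i \<inter> nzs u j = {}"
      using hm_disj[OF hm] unfolding nzs_def by blast
  qed
  also have "\<dots> \<le> card {j. j < n \<and> vadd q u v j \<noteq> 0}"
  proof (rule card_mono)
    show "finite {j. j < n \<and> vadd q u v j \<noteq> 0}" by simp
    show "(\<Union>i<length M. nzs u i) \<subseteq> {j. j < n \<and> vadd q u v j \<noteq> 0}"
      using hm_edge[OF hm] unfolding nzs_def vadd_def by blast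
  qed
  finally show ?thesis unfolding hweight_def .
qed

lemma finite_E1: "finite E1" unfolding E1_def by simp
lemma finite_e0act: "finite (e0act u)" unfolding e0act_def by simp

lemma W1_count:
  assumes u: "u \<in> W1"
  shows "card E1 + 2 * card (e0act u) \<le> h"
proof -
  have uU: "u \<in> UU" and uv: "u \<in> vecs q n" and hw: "hweight n (vadd q u v) = h"
    using u unfolding W1_def UU_def by auto
  have disj: "E1 \<inter> e0act u = {}" unfolding e0act_def by blast
  have sub: "E1 \<union> e0act u \<subseteq> {..<length M}" unfolding E1_def e0act_def by auto
  have "card E1 + 2 * card (e0act u) = (\<Sum>i\<in>E1. 1) + (\<Sum>i\<in>e0act u. 2)" by simp
  also have "\<dots> \<le> (\<Sum>i\<in>E1. card (nzs u i)) + (\<Sum>i\<in>e0act u. card (nzs u i))"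
  proof (rule add_mono)
    show "(\<Sum>i\<in>E1. 1) \<le> (\<Sum>i\<in>E1. card (nzs u i))"
    proof (rule sum_mono)
      fix i assume "i \<in> E1"
      then have "nzs u i \<noteq> {}" by (rule E1_act[OF uU])
      moreover have "finite (nzs u i)" unfolding nzs_def by simp
      ultimately show "1 \<le> card (nzs u i)" by (simp add: Suc_le_eq card_gt_0_iff)
    qed
    show "(\<Sum>i\<in>e0act u. 2) \<le> (\<Sum>i\<in>e0act u. card (nzs u i))"
      by (rule sum_mono) (use E0_two[OF uU] in \<open>auto simp: e0act_def\<close>)
  qed
  also have "\<dots> = (\<Sum>i\<in>E1 \<union> e0act u. card (nzs u i))"
    using disj finite_E1 finite_e0act by (simp add: sum.union_disjoint)
  also have "\<dots> \<le> (\<Sum>i<length M. card (nzs u i))"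
    by (rule sum_mono2) (use sub in auto)
  also have "\<dots> \<le> h" using nzs_sum_le[OF uv] hw by simp
  finally show ?thesis .
qed

lemma e0act_le: "u \<in> W1 \<Longrightarrow> card (e0act u) \<le> h div 2"
  using W1_count by fastforce

lemma finite_W1: "finite W1"
  using finite_vecs[of q n] unfolding W1_def UU_def by (rule finite_subset[rotated]) auto

lemma fiber_card: "card {u \<in> W1. e0act u = D} \<le> q ^ (k * h)"
proof (cases "{u \<in> W1. e0act u = D} = {}")
  case True then show ?thesis by (metis card.empty zero_le)
next
  case False
  then obtain u0 where u0: "u0 \<in> W1" "e0act u0 = D" by blast
  have cED: "card (E1 \<union> D) \<le> h"
    using W1_count[OF u0(1)] card_Un_le[of E1 D] unfolding u0(2) by linarith
  have EDsub: "E1 \<union> D \<subseteq> {..<length M}" using u0(2) unfolding E1_def e0act_def by auto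
  define J where "J = (\<Union>i\<in>E1 \<union> D. set (M ! i))"
  have fED: "finite (E1 \<union> D)" using EDsub finite_subset by blast
  have Jn: "J \<subseteq> {..<n}" unfolding J_def using EDsub hm_edge[OF hm] by blast
  have "card J \<le> (\<Sum>i\<in>E1 \<union> D. card (set (M ! i)))"
    unfolding J_def by (rule card_UN_le[OF fED])
  also have "\<dots> = (\<Sum>i\<in>E1 \<union> D. k)"
  proof (rule sum.cong[OF refl])
    fix i assume "i \<in> E1 \<union> D"
    then have "i < length M" using EDsub by blast
    then show "card (set (M ! i)) = k" using hm_edge[OF hm] by (simp add: distinct_card)
  qed
  also have "\<dots> = k * card (E1 \<union> D)" by simp
  also have "\<dots> \<le> k * h" using cED by simp
  finally have cJ: "card J \<le> k * h" .
  have fJ: "finite J" using Jn finite_subset by blast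
  have inj: "inj_on (\<lambda>u. restrict u J) {u \<in> W1. e0act u = D}"
  proof (rule inj_onI)
    fix u u' assume u: "u \<in> {u \<in> W1. e0act u = D}" and u': "u' \<in> {u \<in> W1. e0act u = D}"
      and e: "restrict u J = restrict u' J"
    have uU: "u \<in> UU" "u' \<in> UU" using u u' unfolding W1_def by auto
    have uv: "u \<in> vecs q n" "u' \<in> vecs q n" using uU unfolding UU_def by auto
    show "u = u'"
    proof
      fix j
      show "u j = u' j"
      proof (cases "j \<in> J")
        case True then show ?thesis using e by (metis restrict_apply')
      next
        case notJ: False
        show ?thesis
        proof (cases "j < n")
          case False then show ?thesis using uv unfolding vecs_def by auto
        next
          case jn: True
          show ?thesis
          proof (cases "covered M j")
            case False then show ?thesis using uU jn unfolding UU_def by auto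
          next
            case True
            then obtain i where i: "i < length M" "j \<in> set (M ! i)" unfolding covered_def by blast
            have iED: "i \<notin> E1 \<union> D" using notJ i(2) unfolding J_def by blast
            have "nzs u i = {}" "nzs u' i = {}"
              using iED i(1) u u' unfolding e0act_def by auto
            then have "(u j + v j) mod q = 0" "(u' j + v j) mod q = 0"
              using i(2) unfolding nzs_def by auto
            moreover have "u j < q" "u' j < q" using uv jn unfolding vecs_def by auto
            ultimately show ?thesis using mod_eq_small by metis
          qed
        qed
      qed
    qed
  qed
  have img: "(\<lambda>u. restrict u J) ` {u \<in> W1. e0act u = D} \<subseteq> PiE J (\<lambda>_. {..<q})"
  proof
    fix f assume "f \<in> (\<lambda>u. restrict u J) ` {u \<in> W1. e0act u = D}"
    then obtain u where u: "u \<in> W1" "f = restrict u J" by blast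
    have "u \<in> vecs q n" using u unfolding W1_def UU_def by auto
    then show "f \<in> PiE J (\<lambda>_. {..<q})" using u(2) Jn unfolding vecs_def by auto
  qed
  have "card {u \<in> W1. e0act u = D} \<le> card (PiE J (\<lambda>_. {..<q}))"
    by (rule card_inj_on_le[OF inj img]) (simp add: fJ finite_PiE)
  also have "\<dots> = q ^ card J" using fJ by (simp add: card_PiE)
  also have "\<dots> \<le> q ^ (k * h)" using cJ q0 by (simp add: power_increasing)
  finally show ?thesis .
qed

end



definition sg :: "nat \<Rightarrow> nat \<Rightarrow> int" where "sg r i = (if i < r then -1 else 1)"
definition Zs :: "nat \<Rightarrow> nat \<Rightarrow> nat \<Rightarrow> (nat \<Rightarrow> nat \<Rightarrow> nat) \<Rightarrow> bool" where
  "Zs q n r t = (\<forall>j<n. int q dvd (\<Sum>i<2*r. sg r i * int (t i j)))"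

lemma sum_sg: "(\<Sum>i<2*r. sg r i) = 0"
proof -
  have e: "{..<2*r} = {..<r} \<union> {r..<2*r}" by auto
  have "(\<Sum>i<2*r. sg r i) = (\<Sum>i<r. sg r i) + (\<Sum>i\<in>{r..<2*r}. sg r i)"
    unfolding e by (rule sum.union_disjoint) auto
  also have "(\<Sum>i<r. sg r i) = (\<Sum>i<r. -1)" by (rule sum.cong) (auto simp: sg_def)
  also have "(\<Sum>i\<in>{r..<2*r}. sg r i) = (\<Sum>i\<in>{r..<2*r}. 1)" by (rule sum.cong) (auto simp: sg_def)
  finally show ?thesis by simp
qed

lemma binom_real: "real (a choose j) \<le> real a ^ j / fact j"
proof -
  have "(a choose j) * fact j \<le> a ^ j" by (rule binomial_fact_pow)
  then have "real ((a choose j) * fact j) \<le> real (a ^ j)" by (simp only: of_nat_le_iff)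
  then have "real (a choose j) * fact j \<le> real a ^ j" by simp
  then show ?thesis by (simp add: field_simps)
qed

context cnt begin

lemma K_prop:
  assumes t: "\<forall>i<2*r. t i \<in> vecs q n" and Z: "Zs q n r t" and i0: "i0 < 2*r"
    and l: "l < length M" and ne: "nzs (t i0) l \<noteq> {}"
  shows "\<exists>i1<2*r. i1 \<noteq> i0 \<and> nzs (t i1) l \<noteq> {}"
proof (rule ccontr)
  assume "\<not> ?thesis"
  then have others: "\<forall>i1<2*r. i1 \<noteq> i0 \<longrightarrow> nzs (t i1) l = {}" by blast
  have "nzs (t i0) l = {}"
  proof -
    { fix j assume j: "j \<in> set (M ! l)"
      have jn: "j < n" using hm_edge[OF hm l] j by auto
      have dv: "int q dvd int (t i j) + int (v j)" if "i < 2*r" "i \<noteq> i0" for i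
      proof -
        have "(t i j + v j) mod q = 0" using others that j unfolding nzs_def by auto
        then have "q dvd t i j + v j" by (simp add: dvd_eq_mod_eq_0)
        then have "int q dvd int (t i j + v j)" by (simp only: of_nat_dvd_iff)
        then show ?thesis by simp
      qed
      have "(\<Sum>i<2*r. sg r i * int (t i j)) = (\<Sum>i<2*r. sg r i * (int (t i j) + int (v j))) - (\<Sum>i<2*r. sg r i) * int (v j)"
        by (simp add: distrib_left sum.distrib sum_distrib_right)
      also have "\<dots> = (\<Sum>i<2*r. sg r i * (int (t i j) + int (v j)))" by (simp add: sum_sg)
      also have "\<dots> = sg r i0 * (int (t i0 j) + int (v j)) + (\<Sum>i\<in>{..<2*r}-{i0}. sg r i * (int (t i j) + int (v j)))"
        using i0 by (simp add: sum.remove)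
      finally have eq: "(\<Sum>i<2*r. sg r i * int (t i j)) = sg r i0 * (int (t i0 j) + int (v j)) + (\<Sum>i\<in>{..<2*r}-{i0}. sg r i * (int (t i j) + int (v j)))" .
      have d2: "int q dvd (\<Sum>i\<in>{..<2*r}-{i0}. sg r i * (int (t i j) + int (v j)))"
        by (rule dvd_sum) (use dv in auto)
      have d1: "int q dvd (\<Sum>i<2*r. sg r i * int (t i j))" using Z jn unfolding Zs_def by blast
      have "int q dvd sg r i0 * (int (t i0 j) + int (v j)) + (\<Sum>i\<in>{..<2*r}-{i0}. sg r i * (int (t i j) + int (v j)))"
        using d1 unfolding eq .
      then have "int q dvd sg r i0 * (int (t i0 j) + int (v j))" by (rule dvd_add_left_iff[OF d2, THEN iffD1])
      then have "int q dvd (int (t i0 j) + int (v j))"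
      proof (cases "i0 < r")
        case True
        with \<open>int q dvd sg r i0 * (int (t i0 j) + int (v j))\<close>
        have "int q dvd - (int (t i0 j) + int (v j))" by (simp add: sg_def)
        then show ?thesis by (simp only: dvd_minus_iff)
      next
        case False
        with \<open>int q dvd sg r i0 * (int (t i0 j) + int (v j))\<close> show ?thesis by (simp add: sg_def)
      qed
      then have "int q dvd int (t i0 j + v j)" by simp
      then have "q dvd (t i0 j + v j)" by (simp only: of_nat_dvd_iff)
      then have "(t i0 j + v j) mod q = 0" by (simp add: dvd_eq_mod_eq_0)
    }
    then show ?thesis unfolding nzs_def by auto
  qed
  with ne show False by simp
qed

lemma cover_card:
  assumes t: "\<forall>i<2*r. t i \<in> W1" and Z: "Zs q n r t"
  shows "card (\<Union>i<2*r. e0act (t i)) \<le> r * (h div 2)"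
proof -
  have "2 * card (\<Union>i<2*r. e0act (t i)) \<le> (\<Sum>i<2*r. card (e0act (t i)))"
  proof (rule double_count)
    show "finite {..<2*r}" by simp
    show "\<And>i. i \<in> {..<2*r} \<Longrightarrow> finite (e0act (t i))" by (rule finite_e0act)
    fix l assume "l \<in> (\<Union>i\<in>{..<2*r}. e0act (t i))"
    then obtain i0 where i0: "i0 < 2*r" "l \<in> e0act (t i0)" by auto
    then have l: "l < length M" "l \<notin> E1" "nzs (t i0) l \<noteq> {}" unfolding e0act_def by auto
    have tv: "\<forall>i<2*r. t i \<in> vecs q n" using t unfolding W1_def UU_def by auto
    obtain i1 where "i1 < 2*r" "i1 \<noteq> i0" "nzs (t i1) l \<noteq> {}"
      using K_prop[OF tv Z i0(1) l(1) l(3)] by blast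
    then show "\<exists>i1\<in>{..<2*r}. \<exists>i2\<in>{..<2*r}. i1 \<noteq> i2 \<and> l \<in> e0act (t i1) \<and> l \<in> e0act (t i2)"
      using i0 l unfolding e0act_def by auto
  qed
  also have "\<dots> \<le> (\<Sum>i<2*r. h div 2)" by (rule sum_mono) (use e0act_le t in auto)
  also have "\<dots> = 2 * (r * (h div 2))" by simp
  finally show ?thesis by simp
qed

definition "GG r = {t \<in> PiE {..<2*r} (\<lambda>_. W1). Zs q n r t}"
definition "W1S S = {u \<in> W1. e0act u \<subseteq> S}"

lemma G_card:
  "card (GG r) \<le> (\<Sum>S\<in>{S. S \<subseteq> {..<length M} \<and> card S \<le> r * (h div 2)}. card (W1S S) ^ (2*r))"
proof -
  let ?SS = "{S. S \<subseteq> {..<length M} \<and> card S \<le> r * (h div 2)}"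
  have fSS: "finite ?SS" by (rule finite_subset[of _ "Pow {..<length M}"]) auto
  have sub: "GG r \<subseteq> (\<Union>S\<in>?SS. PiE {..<2*r} (\<lambda>_. W1S S))"
  proof
    fix t assume t: "t \<in> GG r"
    then have tP: "t \<in> PiE {..<2*r} (\<lambda>_. W1)" and Z: "Zs q n r t" unfolding GG_def by auto
    then have tW: "\<forall>i<2*r. t i \<in> W1" by auto
    let ?S = "\<Union>i<2*r. e0act (t i)"
    have "?S \<in> ?SS" using cover_card[OF tW Z] unfolding e0act_def by auto
    moreover have "t \<in> PiE {..<2*r} (\<lambda>_. W1S ?S)" using tP unfolding W1S_def PiE_def Pi_def by auto
    ultimately show "t \<in> (\<Union>S\<in>?SS. PiE {..<2*r} (\<lambda>_. W1S S))" by blast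
  qed
  have fin: "finite (\<Union>S\<in>?SS. PiE {..<2*r} (\<lambda>_. W1S S))"
    using fSS finite_W1 by (auto simp: W1S_def intro!: finite_PiE)
  have "card (GG r) \<le> card (\<Union>S\<in>?SS. PiE {..<2*r} (\<lambda>_. W1S S))"
    by (rule card_mono[OF fin sub])
  also have "\<dots> \<le> (\<Sum>S\<in>?SS. card (PiE {..<2*r} (\<lambda>_. W1S S)))" by (rule card_UN_le[OF fSS])
  also have "\<dots> = (\<Sum>S\<in>?SS. card (W1S S) ^ (2*r))" by (simp add: card_PiE)
  finally show ?thesis .
qed

lemma W1S_card:
  assumes fS: "finite S"
  shows "card (W1S S) \<le> ((card S + h div 2) choose (h div 2)) * q ^ (k*h)"
proof -
  let ?DD = "{D. D \<subseteq> S \<and> card D \<le> h div 2}"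
  have fDD: "finite ?DD" by (rule finite_subset[of _ "Pow S"]) (use fS in auto)
  have "W1S S \<subseteq> (\<Union>D\<in>?DD. {u \<in> W1. e0act u = D})" unfolding W1S_def using e0act_le by auto
  then have "card (W1S S) \<le> card (\<Union>D\<in>?DD. {u \<in> W1. e0act u = D})"
    by (rule card_mono[rotated]) (use fDD finite_W1 in auto)
  also have "\<dots> \<le> (\<Sum>D\<in>?DD. card {u \<in> W1. e0act u = D})" by (rule card_UN_le[OF fDD])
  also have "\<dots> \<le> (\<Sum>D\<in>?DD. q ^ (k*h))" by (rule sum_mono) (rule fiber_card)
  also have "\<dots> = card ?DD * q ^ (k*h)" by simp
  also have "\<dots> \<le> ((card S + h div 2) choose (h div 2)) * q ^ (k*h)"
    using card_small_subsets[OF fS] by simp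
  finally show ?thesis .
qed

lemma G_bound:
  "real (card (GG r)) \<le> real ((length M + r * (h div 2)) choose (r * (h div 2))) *
     (real (r * (h div 2) + h div 2) ^ (h div 2) / fact (h div 2) * real q ^ (k * h)) ^ (2*r)"
proof -
  let ?SS = "{S. S \<subseteq> {..<length M} \<and> card S \<le> r * (h div 2)}"
  let ?X = "real (r * (h div 2) + h div 2) ^ (h div 2) / fact (h div 2) * real q ^ (k * h)"
  have "real (card (GG r)) \<le> (\<Sum>S\<in>?SS. real (card (W1S S)) ^ (2*r))"
  proof -
    have "real (card (GG r)) \<le> real (\<Sum>S\<in>?SS. card (W1S S) ^ (2*r))"
      using G_card[of r] by (simp only: of_nat_le_iff)
    then show ?thesis by simp
  qed
  also have "\<dots> \<le> (\<Sum>S\<in>?SS. ?X ^ (2*r))"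
  proof (rule sum_mono)
    fix S assume S: "S \<in> ?SS"
    have fS: "finite S" using S finite_subset by blast
    have "real (card (W1S S)) \<le> real ((card S + h div 2) choose (h div 2)) * real q ^ (k*h)"
    proof -
      have "real (card (W1S S)) \<le> real (((card S + h div 2) choose (h div 2)) * q ^ (k*h))"
        using W1S_card[OF fS] by (simp only: of_nat_le_iff)
      then show ?thesis by simp
    qed
    also have "\<dots> \<le> ?X"
    proof (rule mult_right_mono)
      have "real ((card S + h div 2) choose (h div 2)) \<le> real (card S + h div 2) ^ (h div 2) / fact (h div 2)"
        by (rule binom_real)
      also have "\<dots> \<le> real (r * (h div 2) + h div 2) ^ (h div 2) / fact (h div 2)"
      proof (intro divide_right_mono power_mono)
        have "card S + h div 2 \<le> r * (h div 2) + h div 2" using S by auto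
        then show "real (card S + h div 2) \<le> real (r * (h div 2) + h div 2)" by (simp only: of_nat_le_iff)
      qed auto
      finally show "real ((card S + h div 2) choose (h div 2)) \<le> real (r * (h div 2) + h div 2) ^ (h div 2) / fact (h div 2)" .
    qed simp
    finally show "real (card (W1S S)) ^ (2*r) \<le> ?X ^ (2*r)" by (rule power_mono) simp
  qed
  also have "\<dots> = real (card ?SS) * ?X ^ (2*r)" by simp
  also have "\<dots> \<le> real ((length M + r * (h div 2)) choose (r * (h div 2))) * ?X ^ (2*r)"
    using card_small_subsets[of "{..<length M}" "r * (h div 2)"] by (intro mult_right_mono) auto
  finally show ?thesis .
qed

end



lemma chi_mult: "chi q n w1 x * chi q n w2 x = chi q n (\<lambda>j. w1 j + w2 j) x"
  unfolding chi_def by (simp add: cis_mult[symmetric] distrib_right sum.distrib add_divide_distrib algebra_simps)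

lemma chi_zero: "chi q n (\<lambda>j. 0) x = 1"
  unfolding chi_def by simp

lemma chi_prod: "finite I \<Longrightarrow> (\<Prod>i\<in>I. chi q n (w i) x) = chi q n (\<lambda>j. \<Sum>i\<in>I. w i j) x"
proof (induction I rule: finite_induct)
  case empty then show ?case using chi_zero by simp
next
  case (insert a I)
  then show ?case by (simp add: chi_mult)
qed

lemma chi_cnj: "cnj (chi q n w x) = chi q n (\<lambda>j. - w j) x"
  unfolding chi_def by (simp add: cis_cnj sum_negf)

lemma norm_chi: "cmod (chi q n w x) = 1"
  unfolding chi_def by simp

lemma orth:
  assumes q: "q \<ge> 2"
  shows "cmod (\<Sum>x\<in>vecs q n. chi q n w x) \<le> (if \<forall>j<n. int q dvd w j then real (q ^ n) else 0)"
proof (cases "\<forall>j<n. int q dvd w j")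
  case True
  have "cmod (\<Sum>x\<in>vecs q n. chi q n w x) \<le> (\<Sum>x\<in>vecs q n. cmod (chi q n w x))" by (rule norm_sum)
  also have "\<dots> = real (q ^ n)" by (simp add: norm_chi card_vecs)
  finally show ?thesis using True by simp
next
  case False
  then obtain j where j: "j < n" "\<not> int q dvd w j" by blast
  have q0: "q > 0" using q by simp
  define z where "z = (\<lambda>i::nat. if i = j then 1 else 0::nat)"
  have z: "z \<in> vecs q n" unfolding z_def using unit_vec[OF q j(1)] .
  have "(\<Sum>l<n. w l * int (z l)) = w j"
    unfolding z_def using j(1) by (simp add: if_distrib cong: if_cong)
  then have cz: "chi q n w z = cis (2 * pi * real_of_int (w j) / real q)"
    unfolding chi_def by simp
  have "(\<Sum>x\<in>vecs q n. chi q n w x) = 0"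
    by (rule sum_chi_zero[OF q0 order_refl z vadd_vecs[OF q0 _ z]]) (use cz cis_ne_1[OF q0 j(2)] in auto)
  then show ?thesis using False by simp
qed

lemma norm_sgn_le: "cmod (sgn (z::complex)) \<le> 1"
  by (cases "z = 0") (simp_all add: norm_sgn)

lemma cmod_sgn_eq: "complex_of_real (cmod z) = cnj (sgn z) * z"
proof (cases "z = 0")
  case True then show ?thesis by simp
next
  case False
  have "cnj (sgn z) * z = cnj z * z / complex_of_real (cmod z)"
    by (simp add: sgn_eq)
  also have "cnj z * z = complex_of_real ((cmod z)\<^sup>2)" using complex_norm_square[of z] by (simp add: mult.commute)
  also have "\<dots> / complex_of_real (cmod z) = complex_of_real (cmod z)"
    using False by (simp add: power2_eq_square)
  finally show ?thesis by simp
qed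

lemma prod_split_r: "(\<Prod>i<2*r. (if i < r then a else b)) = a ^ r * (b::'a::comm_monoid_mult) ^ r"
proof -
  have e: "{..<2*r} = {..<r} \<union> {r..<2*r}" by auto
  have "(\<Prod>i<2*r. (if i < r then a else b)) = (\<Prod>i<r. (if i < r then a else b)) * (\<Prod>i\<in>{r..<2*r}. (if i < r then a else b))"
    unfolding e by (rule prod.union_disjoint) auto
  also have "(\<Prod>i<r. (if i < r then a else b)) = (\<Prod>i<r. a)" by (rule prod.cong) auto
  also have "(\<Prod>i\<in>{r..<2*r}. (if i < r then a else b)) = (\<Prod>i\<in>{r..<2*r}. b)" by (rule prod.cong) auto
  finally show ?thesis by simp
qed

lemma jensen_pow:
  assumes "finite B" "B \<noteq> {}" "\<And>x. x \<in> B \<Longrightarrow> y x \<ge> 0" and that: "even p"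
  shows "((\<Sum>x\<in>B. y x) / real (card B)) ^ p \<le> (\<Sum>x\<in>B. y x ^ p) / real (card B)"
proof -
  have cB: "real (card B) > 0" using assms(1,2) by (simp add: card_gt_0_iff)
  have "(\<Sum>x\<in>B. (1 / real (card B)) *\<^sub>R y x) ^ p \<le> (\<Sum>x\<in>B. (1 / real (card B)) * (y x) ^ p)"
    by (rule convex_on_sum[OF assms(1,2) convex_power_even[OF that], of "\<lambda>_. 1 / real (card B)" y])
       (use cB in auto)
  moreover have "(\<Sum>x\<in>B. (1 / real (card B)) *\<^sub>R y x) = (\<Sum>x\<in>B. y x) / real (card B)"
    by (simp add: sum_divide_distrib)
  moreover have "(\<Sum>x\<in>B. (1 / real (card B)) * (y x) ^ p) = (\<Sum>x\<in>B. y x ^ p) / real (card B)"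
    by (simp add: sum_divide_distrib)
  ultimately show ?thesis by simp
qed




context cnt begin

lemma moment_core:
  fixes \<sigma> :: "(nat \<Rightarrow> nat) \<Rightarrow> complex"
  assumes sig: "\<And>u. cmod (\<sigma> u) \<le> 1"
  defines "P \<equiv> \<lambda>x. (\<Sum>u\<in>W1. \<sigma> u * chi q n (\<lambda>j. - int (u j)) x)"
  shows "(\<Sum>x\<in>vecs q n. cmod (P x) ^ (2*r)) \<le> real (q^n) * real (card (GG r))"
proof -
  define cf where "cf t = (\<Prod>i<2*r. if i < r then \<sigma> (t i) else cnj (\<sigma> (t i)))" for t :: "nat \<Rightarrow> nat \<Rightarrow> nat"
  define wt where "wt t = (\<lambda>j. \<Sum>i<2*r. sg r i * int (t i j))" for t :: "nat \<Rightarrow> nat \<Rightarrow> nat"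
  let ?T = "PiE {..<2*r} (\<lambda>_. W1)"
  have fT: "finite ?T" using finite_W1 by (simp add: finite_PiE)
  have pt: "complex_of_real (cmod (P x) ^ (2*r)) = (\<Sum>t\<in>?T. cf t * chi q n (wt t) x)" for x
  proof -
    have "complex_of_real (cmod (P x) ^ (2*r)) = (complex_of_real ((cmod (P x))\<^sup>2)) ^ r"
      by (simp add: power_mult)
    also have "\<dots> = (P x * cnj (P x)) ^ r" by (simp only: complex_norm_square)
    also have "\<dots> = (\<Prod>i<2*r. if i < r then P x else cnj (P x))" by (simp add: prod_split_r power_mult_distrib)
    also have "\<dots> = (\<Prod>i<2*r. \<Sum>u\<in>W1. (if i < r then \<sigma> u else cnj (\<sigma> u)) * chi q n (\<lambda>j. sg r i * int (u j)) x)"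
    proof (rule prod.cong[OF refl])
      fix i assume "i \<in> {..<2*r}"
      show "(if i < r then P x else cnj (P x)) = (\<Sum>u\<in>W1. (if i < r then \<sigma> u else cnj (\<sigma> u)) * chi q n (\<lambda>j. sg r i * int (u j)) x)"
        unfolding P_def sg_def by (auto simp: chi_cnj)
    qed
    also have "\<dots> = (\<Sum>t\<in>?T. \<Prod>i<2*r. (if i < r then \<sigma> (t i) else cnj (\<sigma> (t i))) * chi q n (\<lambda>j. sg r i * int (t i j)) x)"
      by (rule prod_sum_PiE) (simp_all add: finite_W1)
    also have "\<dots> = (\<Sum>t\<in>?T. cf t * chi q n (wt t) x)"
      unfolding cf_def wt_def by (simp add: prod.distrib chi_prod)
    finally show ?thesis .
  qed
  have nn: "(\<Sum>x\<in>vecs q n. cmod (P x) ^ (2*r)) \<ge> 0" by (simp add: sum_nonneg)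
  have "(\<Sum>x\<in>vecs q n. cmod (P x) ^ (2*r)) = cmod (complex_of_real (\<Sum>x\<in>vecs q n. cmod (P x) ^ (2*r)))"
    by (simp only: norm_of_real abs_of_nonneg[OF nn])
  also have "complex_of_real (\<Sum>x\<in>vecs q n. cmod (P x) ^ (2*r)) = (\<Sum>x\<in>vecs q n. \<Sum>t\<in>?T. cf t * chi q n (wt t) x)"
    by (simp only: of_real_sum pt)
  also have "\<dots> = (\<Sum>t\<in>?T. cf t * (\<Sum>x\<in>vecs q n. chi q n (wt t) x))"
    by (subst sum.swap) (simp add: sum_distrib_left)
  also have "cmod \<dots> \<le> (\<Sum>t\<in>?T. cmod (cf t) * cmod (\<Sum>x\<in>vecs q n. chi q n (wt t) x))"
    by (rule order_trans[OF norm_sum]) (simp add: norm_mult)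
  also have "\<dots> \<le> (\<Sum>t\<in>?T. if Zs q n r t then real (q^n) else 0)"
  proof (rule sum_mono)
    fix t assume "t \<in> ?T"
    have c1: "cmod (cf t) \<le> 1"
    proof -
      have "cmod (cf t) = (\<Prod>i<2*r. cmod (if i < r then \<sigma> (t i) else cnj (\<sigma> (t i))))"
        unfolding cf_def by (simp add: prod_norm)
      also have "\<dots> \<le> 1" by (rule prod_le_1) (use sig in auto)
      finally show ?thesis .
    qed
    have c2: "cmod (\<Sum>x\<in>vecs q n. chi q n (wt t) x) \<le> (if Zs q n r t then real (q^n) else 0)"
      using orth[OF q, of n "wt t"] unfolding Zs_def wt_def by simp
    show "cmod (cf t) * cmod (\<Sum>x\<in>vecs q n. chi q n (wt t) x) \<le> (if Zs q n r t then real (q^n) else 0)"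
      using mult_mono[OF c1 c2] by simp
  qed
  also have "\<dots> = (\<Sum>t\<in>GG r. real (q^n))"
    unfolding GG_def by (rule sum.inter_filter[OF fT, symmetric])
  also have "\<dots> = real (q^n) * real (card (GG r))" by simp
  finally show ?thesis .
qed

lemma moment:
  assumes Bv: "B \<subseteq> vecs q n" and Bne: "B \<noteq> {}"
    and supp: "\<And>u. u \<in> vecs q n \<Longrightarrow> u \<notin> UU \<Longrightarrow> fourier q n (indic_set B) u = 0"
  shows "(\<Sum>u\<in>{u\<in>vecs q n. hweight n (vadd q u v) = h}. real (q^n) / real (card B) * cmod (fourier q n (indic_set B) u)) ^ (2*r)
         \<le> real (q^n) / real (card B) * real (card (GG r))"
proof -
  define W where "W = {u\<in>vecs q n. hweight n (vadd q u v) = h}"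
  define Gf where "Gf u = (\<Sum>x\<in>B. chi q n (\<lambda>j. - int (u j)) x)" for u
  define \<sigma> where "\<sigma> u = cnj (sgn (Gf u))" for u
  define P where "P x = (\<Sum>u\<in>W1. \<sigma> u * chi q n (\<lambda>j. - int (u j)) x)" for x
  have fB: "finite B" using Bv finite_vecs finite_subset by blast
  have cB: "real (card B) > 0" using fB Bne by (simp add: card_gt_0_iff)
  have W1W: "W1 \<subseteq> W" unfolding W1_def W_def UU_def by auto
  have fW: "finite W" unfolding W_def using finite_vecs by simp
  have s1: "(\<Sum>u\<in>W. real (q^n) / real (card B) * cmod (fourier q n (indic_set B) u)) = (\<Sum>u\<in>W1. cmod (Gf u)) / real (card B)"
  proof -
    have "(\<Sum>u\<in>W. real (q^n) / real (card B) * cmod (fourier q n (indic_set B) u)) = (\<Sum>u\<in>W1. real (q^n) / real (card B) * cmod (fourier q n (indic_set B) u))"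
      by (rule sum.mono_neutral_right[OF fW W1W]) (use supp in \<open>auto simp: W_def W1_def\<close>)
    also have "\<dots> = (\<Sum>u\<in>W1. cmod (Gf u) / real (card B))"
    proof (rule sum.cong[OF refl])
      fix u assume "u \<in> W1"
      have qn: "real (q^n) > 0" using q0 by simp
      show "real (q^n) / real (card B) * cmod (fourier q n (indic_set B) u) = cmod (Gf u) / real (card B)"
        unfolding fourier_eq[OF Bv] Gf_def using qn by (simp add: norm_mult norm_divide norm_power)
    qed
    finally show ?thesis by (simp add: sum_divide_distrib)
  qed
  have s2: "(\<Sum>u\<in>W1. cmod (Gf u)) \<le> (\<Sum>x\<in>B. cmod (P x))"
  proof -
    have "complex_of_real (\<Sum>u\<in>W1. cmod (Gf u)) = (\<Sum>u\<in>W1. \<sigma> u * Gf u)" by (simp add: cmod_sgn_eq \<sigma>_def)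
    also have "\<dots> = (\<Sum>u\<in>W1. \<Sum>x\<in>B. \<sigma> u * chi q n (\<lambda>j. - int (u j)) x)" unfolding Gf_def by (simp add: sum_distrib_left)
    also have "\<dots> = (\<Sum>x\<in>B. P x)" unfolding P_def by (rule sum.swap)
    finally have eq: "complex_of_real (\<Sum>u\<in>W1. cmod (Gf u)) = (\<Sum>x\<in>B. P x)" .
    have nn2: "0 \<le> (\<Sum>u\<in>W1. cmod (Gf u))" by (simp add: sum_nonneg)
    have "(\<Sum>u\<in>W1. cmod (Gf u)) = cmod (complex_of_real (\<Sum>u\<in>W1. cmod (Gf u)))"
      by (simp only: norm_of_real abs_of_nonneg[OF nn2])
    also have "\<dots> = cmod (\<Sum>x\<in>B. P x)" using eq by simp
    also have "\<dots> \<le> (\<Sum>x\<in>B. cmod (P x))" by (rule norm_sum)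
    finally show ?thesis .
  qed
  have sig: "cmod (\<sigma> u) \<le> 1" for u unfolding \<sigma>_def using norm_sgn_le by simp
  have s3: "(\<Sum>x\<in>vecs q n. cmod (P x) ^ (2*r)) \<le> real (q^n) * real (card (GG r))"
    unfolding P_def by (rule moment_core[OF sig])
  have "(\<Sum>u\<in>W. real (q^n) / real (card B) * cmod (fourier q n (indic_set B) u)) ^ (2*r)
      = ((\<Sum>u\<in>W1. cmod (Gf u)) / real (card B)) ^ (2*r)" using s1 by simp
  also have "\<dots> \<le> ((\<Sum>x\<in>B. cmod (P x)) / real (card B)) ^ (2*r)"
    by (intro power_mono divide_right_mono s2) (auto intro!: sum_nonneg divide_nonneg_nonneg)
  also have "\<dots> \<le> (\<Sum>x\<in>B. cmod (P x) ^ (2*r)) / real (card B)"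
    by (rule jensen_pow[OF fB Bne]) auto
  also have "\<dots> \<le> (\<Sum>x\<in>vecs q n. cmod (P x) ^ (2*r)) / real (card B)"
    by (intro divide_right_mono sum_mono2[OF finite_vecs Bv]) auto
  also have "\<dots> \<le> real (q^n) * real (card (GG r)) / real (card B)"
    by (intro divide_right_mono s3) simp
  finally show ?thesis unfolding W_def by simp
qed

end



lemma pow_fact:
  assumes "1 \<le> j" "0 \<le> a"
  shows "a ^ j / fact j \<le> (exp 1 * a / real j) ^ j"
proof -
  have fp: "(real j / exp 1) ^ j > 0" using assms by simp
  have "a ^ j / fact j \<le> a ^ j / (real j / exp 1) ^ j"
    by (rule divide_left_mono[OF fact_lower]) (use assms fp in auto)
  also have "\<dots> = (a / (real j / exp 1)) ^ j" by (simp add: power_divide power_mult_distrib)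
  also have "a / (real j / exp 1) = exp 1 * a / real j" by simp
  finally show ?thesis .
qed

lemma exp3: "exp 1 ^ 3 \<le> (27::real)"
proof -
  have "exp 1 ^ 3 \<le> (3::real) ^ 3" by (rule power_mono[OF exp_le]) simp
  then show ?thesis by simp
qed

lemma final_arith:
  fixes q k n m s b h :: nat
  assumes q: "q \<ge> 2" and h1: "1 \<le> h" and hs: "h \<le> s" and b1: "1 \<le> b" and bs: "b \<le> s"
    and sn: "s \<le> n" and mn: "m \<le> n"
  defines "r \<equiv> (b + h - 1) div h" and "d \<equiv> h div 2"
  shows "real q ^ b * (real ((m + r*d) choose (r*d)) * (real (r*d + d) ^ d / fact d * real q ^ (k*h)) ^ (2*r))
         \<le> (64 * real q ^ (2*k+1) * sqrt (real s * real n) / real h) ^ (h*r)"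
proof -
  have dm: "(b + h - 1) div h * h + (b + h - 1) mod h = b + h - 1" by (rule div_mult_mod_eq)
  have ml: "(b + h - 1) mod h < h" using h1 by simp
  have rb: "b \<le> r * h" using dm ml unfolding r_def by linarith
  have rh: "r * h \<le> b + h - 1" using dm unfolding r_def by linarith
  have r1: "1 \<le> r" using rb b1 by (cases r) auto
  have rh2: "r * h \<le> 2 * s" using rh bs hs by linarith
  have d2h: "2 * d \<le> h" unfolding d_def by simp
  have rd_s: "r * d \<le> s"
  proof -
    have "2 * (r * d) = r * (2 * d)" by simp
    also have "\<dots> \<le> r * h" using d2h by simp
    finally show ?thesis using rh2 by linarith
  qed
  define Q where "Q = real q"
  have Q2: "Q \<ge> 2" using q unfolding Q_def by simp
  have Qb: "Q ^ b \<le> Q ^ (r * h)" using Q2 rb by (intro power_increasing) auto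
  have s1': "1 \<le> real s" "1 \<le> real n" using hs h1 sn by simp_all
  have sn1: "1 \<le> real s * real n" using mult_mono[OF s1'] by simp
  have sq1: "1 \<le> sqrt (real s * real n)" using sn1 by simp
  show ?thesis
  proof (cases "d = 0")
    case True
    then have h_1: "h = 1" using h1 unfolding d_def by linarith
    then have rb': "r = b" unfolding r_def by simp
    have "real q ^ b * (real ((m + r*d) choose (r*d)) * (real (r*d + d) ^ d / fact d * real q ^ (k*h)) ^ (2*r))
        = Q ^ ((2*k+1) * b)" using True h_1 rb' unfolding Q_def
      by (simp add: power_mult[symmetric] power_add[symmetric] algebra_simps)
    also have "\<dots> = (Q ^ (2*k+1)) ^ b" by (rule power_mult)
    also have "\<dots> \<le> (64 * Q ^ (2*k+1) * sqrt (real s * real n)) ^ b"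
    proof (rule power_mono)
      have s64: "1 \<le> 64 * sqrt (real s * real n)" using sq1 by linarith
      have "Q ^ (2*k+1) * 1 \<le> Q ^ (2*k+1) * (64 * sqrt (real s * real n))"
        using Q2 by (intro mult_left_mono[OF s64]) auto
      then show "Q ^ (2*k+1) \<le> 64 * Q ^ (2*k+1) * sqrt (real s * real n)" by (simp add: algebra_simps)
    qed (use Q2 in simp)
    finally show ?thesis using h_1 rb' unfolding Q_def by simp
  next
    case False
    then have d1: "1 \<le> d" by simp
    have rd1: "1 \<le> r * d" using r1 d1 by simp
    define E where "E = exp (1::real)"
    have E1: "E \<ge> 1" unfolding E_def by simp
    have E3: "E ^ 3 \<le> 27" unfolding E_def by (rule exp3)
    have T1: "real ((m + r*d) choose (r*d)) \<le> (2 * E * real n / real (r*d)) ^ (r*d)"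
    proof -
      have "real ((m + r*d) choose (r*d)) \<le> real (m + r*d) ^ (r*d) / fact (r*d)" by (rule binom_real)
      also have "\<dots> \<le> (E * real (m + r*d) / real (r*d)) ^ (r*d)"
        unfolding E_def by (rule pow_fact[OF rd1]) simp
      also have "\<dots> \<le> (2 * E * real n / real (r*d)) ^ (r*d)"
      proof (intro power_mono divide_right_mono)
        have "m + r*d \<le> 2 * n" using mn rd_s sn by linarith
        then have "real (m + r*d) \<le> real (2 * n)" by (simp only: of_nat_le_iff)
        then have "real (m + r*d) \<le> 2 * real n" by simp
        then show "E * real (m + r*d) \<le> 2 * E * real n" using E1 by simp
      qed (use E1 in auto)
      finally show ?thesis .
    qed
    have T2: "real (r*d + d) ^ d / fact d \<le> (2 * E * real r) ^ d"
    proof -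
      have "real (r*d + d) ^ d / fact d \<le> (E * real (r*d + d) / real d) ^ d"
        unfolding E_def by (rule pow_fact[OF d1]) simp
      also have "E * real (r*d + d) / real d = E * (real r + 1)" using d1 by (simp add: field_simps)
      also have "(E * (real r + 1)) ^ d \<le> (2 * E * real r) ^ d"
        using r1 E1 by (intro power_mono) auto
      finally show ?thesis .
    qed
    define Z where "Z = 48 * E ^ 3 * (real s * real n) / (real h)\<^sup>2"
    have hpos: "real h > 0" using h1 by simp
    have dpos: "real d > 0" using d1 by simp
    have Z1: "1 \<le> Z"
    proof -
      have "(real h)\<^sup>2 \<le> real s * real n" using hs sn
        by (simp add: power2_eq_square mult_mono)
      also have "\<dots> \<le> 48 * E ^ 3 * (real s * real n)"
      proof -
        have "1 \<le> E ^ 3" using E1 by (rule one_le_power)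
        then have "1 \<le> 48 * E ^ 3" by linarith
        then have "1 * (real s * real n) \<le> 48 * E ^ 3 * (real s * real n)"
          by (intro mult_right_mono) auto
        then show ?thesis by simp
      qed
      finally have "(real h)\<^sup>2 \<le> 48 * E ^ 3 * (real s * real n)" .
      then show ?thesis unfolding Z_def using hpos by (simp add: le_divide_eq)
    qed
    have base: "2 * E * real n / real (r*d) * (2 * E * real r)\<^sup>2 \<le> Z"
    proof -
      have lhs: "2 * E * real n / real (r*d) * (2 * E * real r)\<^sup>2 = 8 * E ^ 3 * real n * real r / real d"
        using rd1 r1 by (simp add: field_simps power2_eq_square power3_eq_cube)
      have key: "real r * (real h)\<^sup>2 \<le> 6 * real s * real d"
      proof -
        have "real (r * h) \<le> real (2 * s)" using rh2 by (simp only: of_nat_le_iff)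
        then have "real r * real h \<le> 2 * real s" by simp
        moreover have "real h \<le> 3 * real d"
        proof -
          have "h \<le> 3 * d" using d1 unfolding d_def by presburger
          then have "real h \<le> real (3 * d)" by (simp only: of_nat_le_iff)
          then show ?thesis by simp
        qed
        ultimately have "(real r * real h) * real h \<le> (2 * real s) * (3 * real d)"
          by (rule mult_mono) auto
        then show ?thesis by (simp add: power2_eq_square algebra_simps)
      qed
      have A: "(8 * E ^ 3 * real n) * (real r * (real h)\<^sup>2) \<le> (8 * E ^ 3 * real n) * (6 * real s * real d)"
        by (rule mult_left_mono[OF key]) (use E1 in simp)
      have "8 * E ^ 3 * real n * real r / real d = ((8 * E ^ 3 * real n) * (real r * (real h)\<^sup>2)) / (real d * (real h)\<^sup>2)"
        using hpos dpos by (simp add: field_simps)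
      also have "\<dots> \<le> ((8 * E ^ 3 * real n) * (6 * real s * real d)) / (real d * (real h)\<^sup>2)"
        by (rule divide_right_mono[OF A]) simp
      also have "\<dots> = Z" unfolding Z_def using hpos dpos by (simp add: field_simps)
      finally show ?thesis using lhs by simp
    qed
    have LHS1: "real q ^ b * (real ((m + r*d) choose (r*d)) * (real (r*d + d) ^ d / fact d * real q ^ (k*h)) ^ (2*r))
      \<le> Q ^ (r*h) * ((2 * E * real n / real (r*d)) ^ (r*d) * ((2 * E * real r) ^ d * Q ^ (k*h)) ^ (2*r))"
      unfolding Q_def[symmetric]
      by (intro mult_mono Qb T1 power_mono T2)
         (use Q2 E1 in \<open>auto intro!: mult_nonneg_nonneg divide_nonneg_nonneg zero_le_power\<close>)
    have P1: "((2 * E * real r) ^ d * Q ^ (k*h)) ^ (2*r) = ((2 * E * real r)\<^sup>2) ^ (r*d) * Q ^ (2*k*(r*h))"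
    proof -
      have "((2 * E * real r) ^ d * Q ^ (k*h)) ^ (2*r) = (2 * E * real r) ^ (d * (2*r)) * Q ^ ((k*h) * (2*r))"
        by (simp only: power_mult_distrib power_mult)
      also have "d * (2*r) = 2 * (r*d)" by simp
      also have "(k*h) * (2*r) = 2*k*(r*h)" by simp
      also have "(2 * E * real r) ^ (2 * (r*d)) = ((2 * E * real r)\<^sup>2) ^ (r*d)" by (rule power_mult)
      finally show ?thesis .
    qed
    have P2: "Q ^ (r*h) * ((2 * E * real n / real (r*d)) ^ (r*d) * (((2 * E * real r)\<^sup>2) ^ (r*d) * Q ^ (2*k*(r*h))))
        = Q ^ ((2*k+1)*(r*h)) * (2 * E * real n / real (r*d) * (2 * E * real r)\<^sup>2) ^ (r*d)"
    proof -
      have e1: "Q ^ ((2*k+1)*(r*h)) = Q ^ (r*h) * Q ^ (2*k*(r*h))"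
      proof -
        have "(2*k+1)*(r*h) = r*h + 2*k*(r*h)" by simp
        then show ?thesis by (simp only: power_add)
      qed
      have e2: "(2 * E * real n / real (r*d) * (2 * E * real r)\<^sup>2) ^ (r*d)
          = (2 * E * real n / real (r*d)) ^ (r*d) * ((2 * E * real r)\<^sup>2) ^ (r*d)"
        by (rule power_mult_distrib)
      show ?thesis unfolding e1 e2 by (simp only: mult_ac)
    qed
    have P3: "Z ^ (r*d) \<le> sqrt Z ^ (r*h)"
    proof -
      have "sqrt Z ^ (2*(r*d)) = (sqrt Z ^ 2) ^ (r*d)" by (rule power_mult)
      also have "sqrt Z ^ 2 = Z" using Z1 by simp
      finally have "Z ^ (r*d) = sqrt Z ^ (2*(r*d))" by simp
      also have "\<dots> \<le> sqrt Z ^ (r*h)"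
      proof (rule power_increasing)
        have "2 * (r*d) = r * (2*d)" by simp
        also have "\<dots> \<le> r * h" using d2h by simp
        finally show "2 * (r*d) \<le> r * h" .
      qed (use Z1 in simp)
      finally show ?thesis .
    qed
    have P4: "Q ^ ((2*k+1)*(r*h)) * sqrt Z ^ (r*h) = (Q ^ (2*k+1) * sqrt Z) ^ (h*r)"
    proof -
      have "(Q ^ (2*k+1) * sqrt Z) ^ (h*r) = (Q ^ (2*k+1)) ^ (r*h) * sqrt Z ^ (r*h)"
        by (simp only: power_mult_distrib mult.commute[of h r])
      also have "(Q ^ (2*k+1)) ^ (r*h) = Q ^ ((2*k+1)*(r*h))" by (rule power_mult[symmetric])
      finally show ?thesis by simp
    qed
    have sqZ: "sqrt Z = sqrt (48 * E ^ 3) * sqrt (real s * real n) / real h"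
    proof -
      have "sqrt Z = sqrt (48 * E ^ 3 * (real s * real n)) / sqrt ((real h)\<^sup>2)"
        unfolding Z_def by (rule real_sqrt_divide)
      also have "sqrt ((real h)\<^sup>2) = real h" by simp
      also have "sqrt (48 * E ^ 3 * (real s * real n)) = sqrt (48 * E ^ 3) * sqrt (real s * real n)"
        by (rule real_sqrt_mult)
      finally show ?thesis .
    qed
    have s64: "sqrt (48 * E ^ 3) \<le> 64"
    proof -
      have "48 * E ^ 3 \<le> 64\<^sup>2" using E3 by simp
      then have "sqrt (48 * E ^ 3) \<le> sqrt (64\<^sup>2)" by (simp only: real_sqrt_le_iff)
      then show ?thesis by simp
    qed
    have P5: "Q ^ (2*k+1) * sqrt Z \<le> 64 * Q ^ (2*k+1) * sqrt (real s * real n) / real h"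
    proof -
      have "sqrt Z \<le> 64 * sqrt (real s * real n) / real h"
        unfolding sqZ using hpos s64 by (intro divide_right_mono mult_right_mono) auto
      then have "Q ^ (2*k+1) * sqrt Z \<le> Q ^ (2*k+1) * (64 * sqrt (real s * real n) / real h)"
        using Q2 by (intro mult_left_mono) auto
      also have "Q ^ (2*k+1) * (64 * sqrt (real s * real n) / real h) = 64 * Q ^ (2*k+1) * sqrt (real s * real n) / real h"
        by (simp only: times_divide_eq_right mult_ac)
      finally show ?thesis .
    qed
    have "real q ^ b * (real ((m + r*d) choose (r*d)) * (real (r*d + d) ^ d / fact d * real q ^ (k*h)) ^ (2*r))
      \<le> Q ^ ((2*k+1)*(r*h)) * (2 * E * real n / real (r*d) * (2 * E * real r)\<^sup>2) ^ (r*d)"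
      using LHS1 unfolding P1 P2 .
    also have "\<dots> \<le> Q ^ ((2*k+1)*(r*h)) * Z ^ (r*d)"
      using base Q2 E1 by (intro mult_left_mono power_mono) (auto intro!: mult_nonneg_nonneg divide_nonneg_nonneg)
    also have "\<dots> \<le> Q ^ ((2*k+1)*(r*h)) * sqrt Z ^ (r*h)"
      using P3 Q2 by (intro mult_left_mono) auto
    also have "\<dots> = (Q ^ (2*k+1) * sqrt Z) ^ (h*r)" by (rule P4)
    also have "\<dots> \<le> (64 * Q ^ (2*k+1) * sqrt (real s * real n) / real h) ^ (h*r)"
      using P5 Q2 Z1 by (intro power_mono) auto
    finally show ?thesis unfolding Q_def .
  qed
qed




theorem lemma5p7:
  fixes q k :: nat and \<alpha> :: real
  assumes "q \<ge> 2" and "k \<ge> 2" and "0 < \<alpha>" and "\<alpha> < 1 / real k"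
  shows "\<exists>C > 0. \<exists>N. \<forall>n \<ge> N. \<forall>M b s B.
           hypermatching k n M \<longrightarrow> real (length M) \<le> \<alpha> * real n \<longrightarrow>
           0 < b \<longrightarrow> b \<le> s \<longrightarrow> real s \<le> real n / 32 \<longrightarrow>
           B \<subseteq> vecs q n \<longrightarrow>
           (\<exists>c. centers M c \<and> restricted q k n M c B) \<longrightarrow>
           card B \<ge> q ^ (n - b) \<longrightarrow>
           reduced q n M C s B"
proof -
  have q: "q \<ge> 2" and k: "k \<ge> 2" using assms by auto
  define C where "C = 64 * real q ^ (2*k+1)"
  have Cpos: "C > 0" unfolding C_def using q by simp
  have main: "reduced q n M C s B"
    if hm: "hypermatching k n M" and mle: "real (length M) \<le> \<alpha> * real n"
      and b0: "0 < b" and bs: "b \<le> s" and s32: "real s \<le> real n / 32"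
      and Bv: "B \<subseteq> vecs q n" and ex: "\<exists>c. centers M c \<and> restricted q k n M c B"
      and cB: "card B \<ge> q ^ (n - b)" for n M b s B
  proof -
    obtain c where ce: "centers M c" and res: "restricted q k n M c B" using ex by blast
    have sn: "s \<le> n" using s32 by simp
    have bn: "b \<le> n" using bs sn by simp
    have mn: "length M \<le> n"
    proof -
      have "1 / real k \<le> 1" using k by simp
      then have "\<alpha> \<le> 1" using assms(4) by linarith
      then have "\<alpha> * real n \<le> 1 * real n" by (intro mult_right_mono) auto
      then have "real (length M) \<le> real n" using mle by simp
      then show ?thesis by simp
    qed
    have S1: "\<forall>u\<in>vecs q n. (\<exists>j<n. u j \<noteq> 0 \<and> \<not> covered M j) \<longrightarrow> fourier q n (indic_set B) u = 0"
      using fourier_supp1[OF q hm ce k res Bv] by blast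
    have S2: "\<forall>u\<in>vecs q n. (\<exists>i<length M. (\<Sum>j\<in>set (M ! i). u j) mod q \<noteq> 0) \<longrightarrow> fourier q n (indic_set B) u = 0"
      using fourier_supp2[OF q hm ce k res Bv] by blast
    have S3: "(\<Sum>u\<in>{u\<in>vecs q n. hweight n (vadd q u v) = h}.
            real (q ^ n) / real (card B) * cmod (fourier q n (indic_set B) u))
        \<le> Ubound q C s n h" if h: "h \<in> {1..s}" and v: "v \<in> vecs q n" for h v
    proof -
      interpret cnt q n k M v h using q hm v by unfold_locales auto
      have supp: "fourier q n (indic_set B) u = 0" if "u \<in> vecs q n" "u \<notin> UU" for u
        using that S1 S2 unfolding UU_def by auto
      have qb: "q ^ (n - b) \<ge> 1" using q by simp
      have cB1: "card B \<ge> 1" using cB qb by linarith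
      then have Bne: "B \<noteq> {}" by auto
      have cBpos: "real (card B) > 0" using cB qb by linarith
      define r where "r = (b + h - 1) div h"
      define d where "d = h div 2"
      have h1: "1 \<le> h" and hs: "h \<le> s" using h by auto
      have r1: "1 \<le> r"
      proof -
        have "h \<le> b + h - 1" using b0 by linarith
        then have "h div h \<le> (b + h - 1) div h" by (rule div_le_mono)
        then show ?thesis unfolding r_def using h1 by simp
      qed
      define L where "L = (\<Sum>u\<in>{u\<in>vecs q n. hweight n (vadd q u v) = h}.
            real (q ^ n) / real (card B) * cmod (fourier q n (indic_set B) u))"
      have L0: "L \<ge> 0" unfolding L_def by (intro sum_nonneg) auto
      have mom: "L ^ (2*r) \<le> real (q^n) / real (card B) * real (card (GG r))"
        unfolding L_def by (rule moment[OF Bv Bne supp])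
      have qn: "real (q^n) / real (card B) \<le> real q ^ b"
      proof -
        have "real (q^n) = real (q^(n-b)) * real q ^ b" using bn by (simp add: power_add[symmetric])
        also have "\<dots> \<le> real (card B) * real q ^ b" using cB by (intro mult_right_mono) auto
        finally show ?thesis using cBpos by (simp add: divide_le_eq mult.commute)
      qed
      have "L ^ (2*r) \<le> real q ^ b * (real ((length M + r*d) choose (r*d)) *
            (real (r*d + d) ^ d / fact d * real q ^ (k*h)) ^ (2*r))"
      proof -
        have "L ^ (2*r) \<le> real (q^n) / real (card B) * real (card (GG r))" by (rule mom)
        also have "\<dots> \<le> real q ^ b * real (card (GG r))"
          by (intro mult_right_mono qn) auto
        also have "\<dots> \<le> real q ^ b * (real ((length M + r*d) choose (r*d)) *
            (real (r*d + d) ^ d / fact d * real q ^ (k*h)) ^ (2*r))"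
          unfolding d_def using G_bound[of r] q by (intro mult_left_mono) auto
        finally show ?thesis .
      qed
      also have "\<dots> \<le> (64 * real q ^ (2*k+1) * sqrt (real s * real n) / real h) ^ (h*r)"
        unfolding r_def d_def by (rule final_arith[OF q h1 hs _ bs sn mn]) (use b0 in simp)
      finally have Lb: "L ^ (2*r) \<le> (C * sqrt (real s * real n) / real h) ^ (h*r)"
        unfolding C_def .
      define X where "X = C * sqrt (real s * real n) / real h"
      have Xpos: "X > 0" unfolding X_def using Cpos h1 hs sn by simp
      have U: "Ubound q C s n h = X powr (real h / 2)"
        unfolding Ubound_def X_def using h1 hs by simp
      have "(X powr (real h / 2)) ^ (2*r) = X powr (real (2*r) * (real h / 2))"
        using Xpos by (simp add: powr_power)
      also have "real (2*r) * (real h / 2) = real (h*r)" by simp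
      also have "X powr real (h*r) = X ^ (h*r)" using Xpos by (rule powr_realpow)
      finally have "L ^ (2*r) \<le> (X powr (real h / 2)) ^ (2*r)" using Lb unfolding X_def by simp
      then have "L ^ Suc (2*r - 1) \<le> (X powr (real h / 2)) ^ Suc (2*r - 1)" using r1 by simp
      then have "L \<le> X powr (real h / 2)" by (rule power_le_imp_le_base) simp
      then show ?thesis unfolding U L_def .
    qed
    show ?thesis unfolding reduced_def using S1 S2 S3 by blast
  qed
  show ?thesis
    by (rule exI[of _ C], rule conjI[OF Cpos], rule exI[of _ 0]) (use main in blast)
qed


end
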